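(* Let $S_\omega$ be a standard graded skew polynomial algebra in $n$ variables at cube roots of unity. Then a subset $F\subset[n]$ is a face of $\Delta_\omega$ if and only if $F$ is an independent set of $I_v(M_\omega)$ for some $v\in[n]$. In particular, $\dim\Delta_\omega=\max\{\alpha(I_v(M_\omega))\mid v\in[n]\}-1$.
   Context: Let $k$ be an algebraically closed field of characteristic $0$; fix a primitive cube root of unity $\zeta_3$. For $\omega=(\omega_{ij})$ with $\omega_{ii}=1$, $\omega_{ij}\omega_{ji}=1$, all cube roots of unity, $S_\omega=k\langle x_1,\dots,x_n\rangle/(x_ix_j-\omega_{ij}x_jx_i)$ with $\deg x_i=1$; its E-matrix is $M_\omega=(m_{ij})$ over $\mathbb{Z}/3\mathbb{Z}$ with $\omega_{ij}=\zeta_3^{m_{ij}}$ (viewed as a digraph on $[n]$ with an edge $i\to j$ iff $m_{ij}=1$). The point simplicial complex $\Delta_\omega$ has vertex set $[n]$ and faces the $F\subset[n]$ with $\omega_{ij}\omega_{jh}\omega_{hi}=1$ for all distinct $i,j,h\in F$; $\dim\Delta=\max\{|F|-1\mid F\in\Delta\}$. For $v\in[n]$ let $X_v$ be the matrix with $(X_v)_{iv}=1$, $(X_v)_{vi}=-1$ for $i\ne v$ and other entries $0$. The isolation $I_v(M)$ of a skew-symmetric $M$ over $\mathbb{Z}/3\mathbb{Z}$ at $v$ is the unique matrix of the form $M+\sum_{u=1}^n a_uX_u$ ($a_u\in\mathbb{Z}/3\mathbb{Z}$) whose $v$-th row and column are zero. A set $T\subset[n]$ is independent in a skew-symmetric $N=(n_{ij})$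 if $n_{ij}=0$ for all distinct $i,j\in T$, and the independence number $\alpha(N)$ is the maximum size of an independent set. *)

theory Defs
  imports Main "HOL-Library.Numeral_Type" "HOL-Computational_Algebra.Polynomial"
begin

text \<open>Vertex set [n] = {1..n}. Matrices are functions nat => nat => 3 (the type 3 is Z/3Z),
  supported on [n] x [n] (entries outside are 0).\<close>

definition alg_closed_type :: "'k::field itself \<Rightarrow> bool" where
  "alg_closed_type T \<longleftrightarrow> (\<forall>p :: 'k poly. degree p > 0 \<longrightarrow> (\<exists>x. poly p x = 0))"

definition cube_param :: "nat \<Rightarrow> (nat \<Rightarrow> nat \<Rightarrow> 'k::field) \<Rightarrow> bool" where
  "cube_param n \<omega> \<longleftrightarrow>
     (\<forall>i\<in>{1..n}. \<omega> i i = 1) \<and>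
     (\<forall>i\<in>{1..n}. \<forall>j\<in>{1..n}. \<omega> i j * \<omega> j i = 1 \<and> \<omega> i j ^ 3 = 1)"

definition Emat :: "nat \<Rightarrow> 'k::field \<Rightarrow> (nat \<Rightarrow> nat \<Rightarrow> 'k) \<Rightarrow> nat \<Rightarrow> nat \<Rightarrow> 3" where
  "Emat n \<zeta> \<omega> i j =
     (if i \<in> {1..n} \<and> j \<in> {1..n} then of_nat (LEAST k::nat. \<omega> i j = \<zeta> ^ k) else 0)"

definition point_complex :: "nat \<Rightarrow> (nat \<Rightarrow> nat \<Rightarrow> 'k::field) \<Rightarrow> nat set set" where
  "point_complex n \<omega> = {F. F \<subseteq> {1..n} \<and>
     (\<forall>i\<in>F. \<forall>j\<in>F. \<forall>h\<in>F. i \<noteq> j \<and> j \<noteq> h \<and> i \<noteq> h \<longrightarrow> \<omega> i j * \<omega> j h * \<omega> h i = 1)}"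

definition cdim :: "nat set set \<Rightarrow> int" where
  "cdim \<Delta> = Max {int (card F) - 1 | F. F \<in> \<Delta>}"

definition Xmat :: "nat \<Rightarrow> nat \<Rightarrow> nat \<Rightarrow> nat \<Rightarrow> 3" where
  "Xmat n v i j =
     (if i \<in> {1..n} \<and> j \<in> {1..n} then
        (if j = v \<and> i \<noteq> v then 1 else if i = v \<and> j \<noteq> v then -1 else 0)
      else 0)"

definition isolation :: "nat \<Rightarrow> nat \<Rightarrow> (nat \<Rightarrow> nat \<Rightarrow> 3) \<Rightarrow> nat \<Rightarrow> nat \<Rightarrow> 3" where
  "isolation n v M = (THE N. (\<exists>a :: nat \<Rightarrow> 3. N = (\<lambda>i j. M i j + (\<Sum>u\<in>{1..n}. a u * Xmat n u i j)))
       \<and> (\<forall>i\<in>{1..n}. N v i = 0 \<and> N i v = 0))"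

definition independent :: "nat \<Rightarrow> (nat \<Rightarrow> nat \<Rightarrow> 3) \<Rightarrow> nat set \<Rightarrow> bool" where
  "independent n N T \<longleftrightarrow> T \<subseteq> {1..n} \<and> (\<forall>i\<in>T. \<forall>j\<in>T. i \<noteq> j \<longrightarrow> N i j = 0)"

definition indep_number :: "nat \<Rightarrow> (nat \<Rightarrow> nat \<Rightarrow> 3) \<Rightarrow> nat" where
  "indep_number n N = Max (card ` {T. independent n N T})"

end

theory Submission
  imports Defs
begin

lemma z3mod: "(of_nat k :: 3) = 0 \<longleftrightarrow> 3 dvd k"
  by (simp add: of_nat_eq_0_iff_char_dvd)

lemma zeta_pow:
  fixes \<zeta> :: "'k::field_char_0"
  assumes "\<zeta>^3 = 1" "\<zeta> \<noteq> 1"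
  shows "\<zeta>^a = 1 \<longleftrightarrow> 3 dvd a"
proof -
  have "\<zeta>^a = \<zeta>^(3 * (a div 3) + a mod 3)" by simp
  also have "\<dots> = (\<zeta>^3)^(a div 3) * \<zeta>^(a mod 3)" by (simp only: power_add power_mult)
  also have "\<dots> = \<zeta>^(a mod 3)" using assms(1) by simp
  finally have "\<zeta>^a = \<zeta>^(a mod 3)" .
  moreover have "\<zeta>^2 \<noteq> 1"
  proof
    assume "\<zeta>^2 = 1" then have "\<zeta>^3 = \<zeta>" by (simp add: power3_eq_cube power2_eq_square)
    with assms show False by simp
  qed
  moreover have "a mod 3 = 0 \<or> a mod 3 = 1 \<or> a mod 3 = 2" by auto
  ultimately show ?thesis using assms(2) by (auto simp: dvd_eq_mod_eq_0)
qed

lemma cube_root: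
  fixes \<zeta> x :: "'k::field_char_0"
  assumes "\<zeta>^3 = 1" "\<zeta> \<noteq> 1" "x^3 = 1"
  shows "\<exists>k. x = \<zeta>^k"
proof -
  have z: "\<zeta>^2 + \<zeta> + 1 = 0"
  proof -
    have "(\<zeta> - 1) * (\<zeta>^2 + \<zeta> + 1) = \<zeta>^3 - 1" by (simp add: algebra_simps power2_eq_square power3_eq_cube)
    with assms show ?thesis by simp
  qed
  have "(x - 1) * (x - \<zeta>) * (x - \<zeta>^2) = x^3 - 1"
  proof -
    have "(x - 1) * (x - \<zeta>) * (x - \<zeta>^2) = x^3 - (\<zeta>^2+\<zeta>+1)*x^2 + \<zeta>*(\<zeta>^2+\<zeta>+1)*x - \<zeta>^3"
      by (simp add: algebra_simps power2_eq_square power3_eq_cube)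
    then show ?thesis using z assms(1) by simp
  qed
  with assms(3) have "x = 1 \<or> x = \<zeta> \<or> x = \<zeta>^2" by simp
  then show ?thesis
  proof (elim disjE)
    assume "x = 1" then show ?thesis by (intro exI[of _ 0]) simp
  next
    assume "x = \<zeta>" then show ?thesis by (intro exI[of _ 1]) simp
  next
    assume "x = \<zeta>^2" then show ?thesis by (intro exI[of _ 2]) simp
  qed
qed

lemma sumX:
  assumes "i \<in> {1..n}" "j \<in> {1..n}"
  shows "(\<Sum>u\<in>{1..n}. a u * Xmat n u i j) = (if i = j then 0 else a j - a i)"
proof (cases "i = j")
  case True
  then show ?thesis unfolding Xmat_def by (auto intro!: sum.neutral)
next
  case False
  have "(\<Sum>u\<in>{1..n}. a u * Xmat n u i j) =
        (\<Sum>u\<in>{1..n}. (if u = j then a u else 0) + (if u = i then - a u else 0))"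
  proof (rule sum.cong)
    fix u assume "u \<in> {1..n}"
    show "a u * Xmat n u i j = (if u = j then a u else 0) + (if u = i then - a u else 0)"
      using assms False unfolding Xmat_def by simp
  qed simp
  also have "\<dots> = a j - a i"
    using assms by (simp add: sum.distrib)
  finally show ?thesis using False by simp
qed

lemma sumX_out:
  assumes "\<not> (i \<in> {1..n} \<and> j \<in> {1..n})"
  shows "(\<Sum>u\<in>{1..n}. a u * Xmat n u i j) = 0"
proof -
  have h: "Xmat n u i j = 0" for u by (simp only: Xmat_def if_not_P[OF assms])
  show ?thesis by (simp add: h)
qed

lemma iso:
  fixes M :: "nat \<Rightarrow> nat \<Rightarrow> 3"
  assumes v: "v \<in> {1..n}"
  and out: "\<And>i j. \<not>(i\<in>{1..n} \<and> j\<in>{1..n}) \<Longrightarrow> M i j = 0"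
  and dg: "\<And>i. i\<in>{1..n} \<Longrightarrow> M i i = 0"
  and sk: "\<And>i j. i\<in>{1..n} \<Longrightarrow> j\<in>{1..n} \<Longrightarrow> M i j + M j i = 0"
  shows "isolation n v M = (\<lambda>i j. if i\<in>{1..n} \<and> j\<in>{1..n} then M i j - M v j + M v i else 0)"
  unfolding isolation_def
proof (rule the_equality)
  let ?T = "(\<lambda>i j. if i\<in>{1..n} \<and> j\<in>{1..n} then M i j - M v j + M v i else 0)"
  show "(\<exists>a. ?T = (\<lambda>i j. M i j + (\<Sum>u\<in>{1..n}. a u * Xmat n u i j))) \<and>
        (\<forall>i\<in>{1..n}. ?T v i = 0 \<and> ?T i v = 0)"
  proof (intro conjI exI[of _ "\<lambda>u. - M v u"] ballI)
    show "?T = (\<lambda>i j. M i j + (\<Sum>u\<in>{1..n}. - M v u * Xmat n u i j))"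
    proof (intro ext)
      fix i j
      show "?T i j = M i j + (\<Sum>u\<in>{1..n}. - M v u * Xmat n u i j)"
      proof (cases "i\<in>{1..n} \<and> j\<in>{1..n}")
        case True
        then have s: "(\<Sum>u\<in>{1..n}. - M v u * Xmat n u i j) = (if i = j then 0 else - M v j - - M v i)"
          using sumX[of i n j "\<lambda>u. - M v u"] by blast
        show ?thesis
        proof (cases "i = j")
          case True2: True
          then show ?thesis using True s by simp
        next
          case False
          then show ?thesis using True s by simp
        qed
      next
        case False
        have "M i j = 0" using out[OF False] .
        moreover have "(\<Sum>u\<in>{1..n}. - M v u * Xmat n u i j) = 0" by (rule sumX_out[OF False])
        ultimately show ?thesis using False by auto
      qed
    qed
  next
    fix i assume i: "i \<in> {1..n}"
    show "?T v i = 0" using v i dg[OF v] by simp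
    have "M i v + M v i = 0" using sk[OF i v] .
    then show "?T i v = 0" using v i dg[OF v] by simp
  qed
next
  fix N
  let ?T = "(\<lambda>i j. if i\<in>{1..n} \<and> j\<in>{1..n} then M i j - M v j + M v i else 0)"
  assume A: "(\<exists>a. N = (\<lambda>i j. M i j + (\<Sum>u\<in>{1..n}. a u * Xmat n u i j))) \<and>
        (\<forall>i\<in>{1..n}. N v i = 0 \<and> N i v = 0)"
  then obtain a where Na: "N = (\<lambda>i j. M i j + (\<Sum>u\<in>{1..n}. a u * Xmat n u i j))" by blast
  have Nin: "N i j = M i j + (if i = j then 0 else a j - a i)" if "i \<in> {1..n}" "j \<in> {1..n}" for i j
    using sumX[OF that, of a] Na by simp
  have ak: "a k = a v - M v k" if k: "k \<in> {1..n}" for k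
  proof (cases "k = v")
    case True then show ?thesis using dg[OF v] by simp
  next
    case False
    have "N v k = 0" using A k by blast
    then have "M v k + (a k - a v) = 0" using Nin[OF v k] False by simp
    then show ?thesis by (simp add: algebra_simps eq_diff_eq)
  qed
  show "N = ?T"
  proof (intro ext)
    fix i j
    show "N i j = ?T i j"
    proof (cases "i\<in>{1..n} \<and> j\<in>{1..n}")
      case True
      then have "N i j = M i j + (if i = j then 0 else a j - a i)" using Nin by blast
      moreover have "a i = a v - M v i" "a j = a v - M v j" using ak True by auto
      ultimately show ?thesis using True by (cases "i = j") (simp_all add: algebra_simps)
    next
      case False
      have "M i j = 0" using out[OF False] .
      moreover have "(\<Sum>u\<in>{1..n}. a u * Xmat n u i j) = 0" by (rule sumX_out[OF False])
      ultimately show ?thesis using Na False by auto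
    qed
  qed
qed

lemma faces_abs:
  fixes M :: "nat \<Rightarrow> nat \<Rightarrow> 3"
  assumes n: "1 \<le> n"
  and dg: "\<And>i. i\<in>{1..n} \<Longrightarrow> M i i = 0"
  and sk: "\<And>i j. i\<in>{1..n} \<Longrightarrow> j\<in>{1..n} \<Longrightarrow> M i j + M j i = 0"
  shows "(F \<subseteq> {1..n} \<and> (\<forall>i\<in>F. \<forall>j\<in>F. \<forall>h\<in>F. i \<noteq> j \<and> j \<noteq> h \<and> i \<noteq> h \<longrightarrow> M i j + M j h + M h i = 0)) \<longleftrightarrow>
   (\<exists>v\<in>{1..n}. F \<subseteq> {1..n} \<and> (\<forall>i\<in>F. \<forall>j\<in>F. i \<noteq> j \<longrightarrow> M i j - M v j + M v i = 0))"
proof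
  assume L: "F \<subseteq> {1..n} \<and> (\<forall>i\<in>F. \<forall>j\<in>F. \<forall>h\<in>F. i \<noteq> j \<and> j \<noteq> h \<and> i \<noteq> h \<longrightarrow> M i j + M j h + M h i = 0)"
  show "\<exists>v\<in>{1..n}. F \<subseteq> {1..n} \<and> (\<forall>i\<in>F. \<forall>j\<in>F. i \<noteq> j \<longrightarrow> M i j - M v j + M v i = 0)"
  proof (cases "F = {}")
    case True then show ?thesis using n by (intro bexI[of _ 1]) auto
  next
    case False
    then obtain v where vF: "v \<in> F" by blast
    have vn: "v \<in> {1..n}" using vF L by blast
    show ?thesis
    proof (intro bexI[of _ v] conjI ballI impI)
      show "F \<subseteq> {1..n}" using L by blast
      show "v \<in> {1..n}" by fact
      fix i j assume i: "i \<in> F" and j: "j \<in> F" and ij: "i \<noteq> j"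
      have iN: "i \<in> {1..n}" and jN: "j \<in> {1..n}" using i j L by blast+
      show "M i j - M v j + M v i = 0"
      proof (cases "v = i")
        case True then show ?thesis using dg[OF iN] by simp
      next
        case vi: False
        show ?thesis
        proof (cases "v = j")
          case True then show ?thesis using dg[OF jN] sk[OF iN jN] by simp
        next
          case False
          have t: "M i j + M j v + M v i = 0" using L i j vF ij vi False by metis
          have "M v j = - M j v" using sk[OF jN vn] by (simp add: eq_neg_iff_add_eq_0 add.commute)
          then show ?thesis using t by (simp add: algebra_simps)
        qed
      qed
    qed
  qed
next
  assume R: "\<exists>v\<in>{1..n}. F \<subseteq> {1..n} \<and> (\<forall>i\<in>F. \<forall>j\<in>F. i \<noteq> j \<longrightarrow> M i j - M v j + M v i = 0)"
  then obtain v where F: "F \<subseteq> {1..n}" and E: "\<forall>i\<in>F. \<forall>j\<in>F. i \<noteq> j \<longrightarrow> M i j - M v j + M v i = 0"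
    by blast
  show "F \<subseteq> {1..n} \<and> (\<forall>i\<in>F. \<forall>j\<in>F. \<forall>h\<in>F. i \<noteq> j \<and> j \<noteq> h \<and> i \<noteq> h \<longrightarrow> M i j + M j h + M h i = 0)"
  proof (intro conjI ballI impI)
    show "F \<subseteq> {1..n}" by fact
    fix i j h assume "i \<in> F" "j \<in> F" "h \<in> F" and d: "i \<noteq> j \<and> j \<noteq> h \<and> i \<noteq> h"
    then have "M i j - M v j + M v i = 0" "M j h - M v h + M v j = 0" "M h i - M v i + M v h = 0"
      using E by auto
    then have "(M i j - M v j + M v i) + (M j h - M v h + M v j) + (M h i - M v i + M v h) = 0" by simp
    then show "M i j + M j h + M h i = 0" by (simp add: algebra_simps)
  qed
qed

theorem proposition5p5:
  fixes \<zeta> :: "'k::field_char_0" and \<omega> :: "nat \<Rightarrow> nat \<Rightarrow> 'k" and n :: nat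
  assumes "alg_closed_type TYPE('k)"
    and "\<zeta> ^ 3 = 1" and "\<zeta> \<noteq> 1"
    and "cube_param n \<omega>"
    and "n \<ge> 1"
  shows "(\<forall>F. F \<in> point_complex n \<omega> \<longleftrightarrow>
             (\<exists>v\<in>{1..n}. independent n (isolation n v (Emat n \<zeta> \<omega>)) F))
       \<and> cdim (point_complex n \<omega>) =
           int (Max {indep_number n (isolation n v (Emat n \<zeta> \<omega>)) | v. v \<in> {1..n}}) - 1"
proof -
  note z3 = assms(2) and z1 = assms(3) and cp = assms(4)[unfolded cube_param_def] and n = assms(5)
  define M where "M = Emat n \<zeta> \<omega>"
  define e where "e i j = (LEAST k::nat. \<omega> i j = \<zeta> ^ k)" for i j
  have ee: "\<omega> i j = \<zeta> ^ e i j" if "i \<in> {1..n}" "j \<in> {1..n}" for i j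
  proof -
    have "\<omega> i j ^ 3 = 1" using cp that by blast
    then have "\<exists>k. \<omega> i j = \<zeta> ^ k" using cube_root[OF z3 z1] by blast
    then show ?thesis unfolding e_def by (rule LeastI_ex)
  qed
  have Me: "M i j = of_nat (e i j)" if "i \<in> {1..n}" "j \<in> {1..n}" for i j
    using that unfolding M_def Emat_def e_def by simp
  have one: "\<omega> i j * \<omega> j h * \<omega> h i = 1 \<longleftrightarrow> M i j + M j h + M h i = 0"
    if "i \<in> {1..n}" "j \<in> {1..n}" "h \<in> {1..n}" for i j h
  proof -
    have "\<omega> i j * \<omega> j h * \<omega> h i = \<zeta> ^ (e i j + e j h + e h i)"
      using ee that by (simp add: power_add)
    then have p: "\<omega> i j * \<omega> j h * \<omega> h i = 1 \<longleftrightarrow> 3 dvd (e i j + e j h + e h i)"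
      using zeta_pow[OF z3 z1] by simp
    have m: "M i j + M j h + M h i = of_nat (e i j + e j h + e h i)"
      using Me that by simp
    have q: "M i j + M j h + M h i = 0 \<longleftrightarrow> 3 dvd (e i j + e j h + e h i)"
      by (simp only: m z3mod)
    show ?thesis using p q by simp
  qed
  have sk: "M i j + M j i = 0" if "i \<in> {1..n}" "j \<in> {1..n}" for i j
  proof -
    have w: "\<omega> i j * \<omega> j i = 1" using cp that by blast
    have "\<zeta> ^ (e i j + e j i) = 1" using w unfolding ee[OF that] ee[OF that(2,1)] by (simp add: power_add)
    then have "3 dvd (e i j + e j i)" using zeta_pow[OF z3 z1] by blast
    then have "(of_nat (e i j + e j i) :: 3) = 0" using z3mod by blast
    then show ?thesis using Me that by simp
  qed
  have dg: "M i i = 0" if "i \<in> {1..n}" for i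
  proof -
    have w: "\<omega> i i = 1" using cp that by blast
    have "\<zeta> ^ (e i i) = 1" using w unfolding ee[OF that that] .
    then have "3 dvd (e i i)" using zeta_pow[OF z3 z1] by blast
    then show ?thesis using Me that z3mod by simp
  qed
  have out: "M i j = 0" if "\<not>(i\<in>{1..n} \<and> j\<in>{1..n})" for i j
    unfolding M_def Emat_def by (simp only: if_not_P[OF that])
  have indep: "independent n (isolation n v M) F \<longleftrightarrow>
      F \<subseteq> {1..n} \<and> (\<forall>i\<in>F. \<forall>j\<in>F. i \<noteq> j \<longrightarrow> M i j - M v j + M v i = 0)"
    if v: "v \<in> {1..n}" for v F
  proof -
    have I: "isolation n v M = (\<lambda>i j. if i\<in>{1..n} \<and> j\<in>{1..n} then M i j - M v j + M v i else 0)"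
      by (rule iso[OF v out dg sk])
    show ?thesis unfolding independent_def I
    proof (intro iffI conjI ballI impI)
      fix i j assume A: "F \<subseteq> {1..n} \<and> (\<forall>i\<in>F. \<forall>j\<in>F. i \<noteq> j \<longrightarrow>
          (if i \<in> {1..n} \<and> j \<in> {1..n} then M i j - M v j + M v i else 0) = 0)"
        and i: "i \<in> F" and j: "j \<in> F" and ij: "i \<noteq> j"
      then have "i \<in> {1..n} \<and> j \<in> {1..n}" by blast
      then show "M i j - M v j + M v i = 0" using A i j ij by metis
    next
      fix i j assume A: "F \<subseteq> {1..n} \<and> (\<forall>i\<in>F. \<forall>j\<in>F. i \<noteq> j \<longrightarrow> M i j - M v j + M v i = 0)"
        and i: "i \<in> F" and j: "j \<in> F" and ij: "i \<noteq> j"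
      then show "(if i \<in> {1..n} \<and> j \<in> {1..n} then M i j - M v j + M v i else 0) = 0" by auto
    qed auto
  qed
  have face: "F \<in> point_complex n \<omega> \<longleftrightarrow>
      F \<subseteq> {1..n} \<and> (\<forall>i\<in>F. \<forall>j\<in>F. \<forall>h\<in>F. i \<noteq> j \<and> j \<noteq> h \<and> i \<noteq> h \<longrightarrow> M i j + M j h + M h i = 0)" for F
    unfolding point_complex_def mem_Collect_eq
  proof (intro iffI conjI ballI impI)
    fix i j h assume A: "F \<subseteq> {1..n} \<and> (\<forall>i\<in>F. \<forall>j\<in>F. \<forall>h\<in>F. i \<noteq> j \<and> j \<noteq> h \<and> i \<noteq> h \<longrightarrow> \<omega> i j * \<omega> j h * \<omega> h i = 1)"
      and "i \<in> F" "j \<in> F" "h \<in> F" "i \<noteq> j \<and> j \<noteq> h \<and> i \<noteq> h"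
    then show "M i j + M j h + M h i = 0" using one[of i j h] by blast
  next
    fix i j h assume A: "F \<subseteq> {1..n} \<and> (\<forall>i\<in>F. \<forall>j\<in>F. \<forall>h\<in>F. i \<noteq> j \<and> j \<noteq> h \<and> i \<noteq> h \<longrightarrow> M i j + M j h + M h i = 0)"
      and "i \<in> F" "j \<in> F" "h \<in> F" "i \<noteq> j \<and> j \<noteq> h \<and> i \<noteq> h"
    then show "\<omega> i j * \<omega> j h * \<omega> h i = 1" using one[of i j h] by blast
  qed auto
  have part1: "F \<in> point_complex n \<omega> \<longleftrightarrow> (\<exists>v\<in>{1..n}. independent n (isolation n v M) F)" for F
  proof -
    have a: "(F \<subseteq> {1..n} \<and> (\<forall>i\<in>F. \<forall>j\<in>F. \<forall>h\<in>F. i \<noteq> j \<and> j \<noteq> h \<and> i \<noteq> h \<longrightarrow> M i j + M j h + M h i = 0)) \<longleftrightarrow>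
      (\<exists>v\<in>{1..n}. F \<subseteq> {1..n} \<and> (\<forall>i\<in>F. \<forall>j\<in>F. i \<noteq> j \<longrightarrow> M i j - M v j + M v i = 0))"
      by (rule faces_abs[OF n dg sk])
    have b: "(\<exists>v\<in>{1..n}. independent n (isolation n v M) F) \<longleftrightarrow>
      (\<exists>v\<in>{1..n}. F \<subseteq> {1..n} \<and> (\<forall>i\<in>F. \<forall>j\<in>F. i \<noteq> j \<longrightarrow> M i j - M v j + M v i = 0))"
      using indep by (intro bex_cong refl) blast
    show ?thesis by (simp only: face a b)
  qed
  define Ind where "Ind v = {T. independent n (isolation n v M) T}" for v
  have finInd: "finite (Ind v)" for v
    by (rule finite_subset[of _ "Pow {1..n}"]) (auto simp: Ind_def independent_def)
  have emInd: "{} \<in> Ind v" for v by (simp add: Ind_def independent_def)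
  let ?K = "Max {indep_number n (isolation n v M) | v. v \<in> {1..n}}"
  have Kset: "{indep_number n (isolation n v M) | v. v \<in> {1..n}} = (\<lambda>v. indep_number n (isolation n v M)) ` {1..n}"
    by blast
  have finP: "finite (point_complex n \<omega>)"
    by (rule finite_subset[of _ "Pow {1..n}"]) (auto simp: point_complex_def)
  have le: "card F \<le> ?K" if "F \<in> point_complex n \<omega>" for F
  proof -
    from that part1[of F] obtain v where v: "v \<in> {1..n}"
      and Fi0: "independent n (isolation n v M) F" by blast
    have Fi: "F \<in> Ind v" using Fi0 by (simp add: Ind_def)
    have "card F \<le> indep_number n (isolation n v M)"
      unfolding indep_number_def Ind_def[symmetric]
      by (rule Max_ge[OF finite_imageI[OF finInd] imageI[OF Fi]])
    also have "\<dots> \<le> ?K" unfolding Kset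
      by (rule Max_ge[OF finite_imageI[OF finite_atLeastAtMost] imageI[OF v]])
    finally show ?thesis .
  qed
  have att: "\<exists>F. F \<in> point_complex n \<omega> \<and> card F = ?K"
  proof -
    have ne: "(\<lambda>v. indep_number n (isolation n v M)) ` {1..n} \<noteq> {}" using n by simp
    have "?K \<in> (\<lambda>v. indep_number n (isolation n v M)) ` {1..n}"
      unfolding Kset by (rule Max_in[OF finite_imageI[OF finite_atLeastAtMost] ne])
    then obtain v where v: "v \<in> {1..n}" and Kv: "?K = indep_number n (isolation n v M)" by blast
    have ne2: "card ` Ind v \<noteq> {}" using emInd[of v] by blast
    have "indep_number n (isolation n v M) \<in> card ` Ind v"
      unfolding indep_number_def Ind_def[symmetric] by (rule Max_in[OF finite_imageI[OF finInd] ne2])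
    then obtain T where T2': "indep_number n (isolation n v M) = card T" and T1: "T \<in> Ind v" by (rule imageE)
    have T2: "card T = indep_number n (isolation n v M)" using T2' by simp
    have "independent n (isolation n v M) T" using T1 by (simp add: Ind_def)
    then have "T \<in> point_complex n \<omega>" using part1[of T] v by blast
    then show ?thesis using T2 Kv by metis
  qed
  have dim: "cdim (point_complex n \<omega>) = int ?K - 1"
    unfolding cdim_def
  proof (rule Max_eqI)
    show "finite {int (card F) - 1 |F. F \<in> point_complex n \<omega>}" using finP by simp
  next
    fix y assume "y \<in> {int (card F) - 1 |F. F \<in> point_complex n \<omega>}"
    then obtain F where y: "y = int (card F) - 1" and F: "F \<in> point_complex n \<omega>" by blast
    show "y \<le> int ?K - 1" using le[OF F] y by simp
  next
    obtain F where F: "F \<in> point_complex n \<omega>" and c: "card F = ?K" using att by blast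
    show "int ?K - 1 \<in> {int (card F) - 1 |F. F \<in> point_complex n \<omega>}"
      unfolding mem_Collect_eq by (intro exI[of _ F] conjI) (simp_all add: c F)
  qed
  show ?thesis using part1 dim unfolding M_def by blast
qed
end
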